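(* Let $m\ge2$, $n=2m+1$, and consider $$(P):\ \sup\ x_m\ \text{ s.t. }\ x_1(E_1+E_{m+1})+\sum_{i=2}^{m-1}x_i(E_i+E_{m+i}+E_{i-1,n}+E_{m+i-1,n})+x_m(E_m-E_{2m}+E_{m-1,n}+E_{2m-1,n})\preceq I_{m+1}\oplus0_m,$$ with dual $(D)$. Then $\operatorname{val}(P)=0<\operatorname{val}(D)=1$.
   Context: $E_{ij}\in\mathcal S^n$ is the symmetric matrix whose only nonzero entries are $1$ in positions $(i,j)$ and $(j,i)$; $E_i:=E_{ii}$. For $(P)$: $\sup\{c^Tx:\sum_ix_iA_i\preceq B\}$ the dual is $(D)$: $\inf\{B\bullet Y:A_i\bullet Y=c_i\ \forall i,\ Y\succeq0\}$, $S\bullet T=\operatorname{trace}(ST)$. *)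

theory Defs
  imports Complex_Main "HOL-Library.Extended_Real"
begin

text \<open>Symmetric n x n real matrices are represented as functions nat => nat => real,
  with indices ranging over {1..n}; entries outside are irrelevant.\<close>

type_synonym rmat = "nat \<Rightarrow> nat \<Rightarrow> real"

definition Emat :: "nat \<Rightarrow> nat \<Rightarrow> rmat" where
  "Emat i j = (\<lambda>a b. if (a = i \<and> b = j) \<or> (a = j \<and> b = i) then 1 else 0)"

abbreviation Ed :: "nat \<Rightarrow> rmat" where "Ed i \<equiv> Emat i i"

definition madd :: "rmat \<Rightarrow> rmat \<Rightarrow> rmat" (infixl "\<oplus>\<^sub>M" 65) where
  "madd S T = (\<lambda>a b. S a b + T a b)"

definition msub :: "rmat \<Rightarrow> rmat \<Rightarrow> rmat" (infixl "\<ominus>\<^sub>M" 65) where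
  "msub S T = (\<lambda>a b. S a b - T a b)"

definition frob :: "nat \<Rightarrow> rmat \<Rightarrow> rmat \<Rightarrow> real" where
  "frob n S T = (\<Sum>a\<in>{1..n}. \<Sum>b\<in>{1..n}. S a b * T b a)"

definition symm :: "nat \<Rightarrow> rmat \<Rightarrow> bool" where
  "symm n M \<longleftrightarrow> (\<forall>a\<in>{1..n}. \<forall>b\<in>{1..n}. M a b = M b a)"

definition psd :: "nat \<Rightarrow> rmat \<Rightarrow> bool" where
  "psd n M \<longleftrightarrow> symm n M \<and>
     (\<forall>v :: nat \<Rightarrow> real. (\<Sum>a\<in>{1..n}. \<Sum>b\<in>{1..n}. v a * M a b * v b) \<ge> 0)"

definition Acon :: "nat \<Rightarrow> nat \<Rightarrow> rmat" where
  "Acon m i = (let n = 2*m+1 in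
     if i = 1 then Ed 1 \<oplus>\<^sub>M Ed (m+1)
     else if i = m then Ed m \<ominus>\<^sub>M Ed (2*m) \<oplus>\<^sub>M Emat (m-1) n \<oplus>\<^sub>M Emat (2*m-1) n
     else Ed i \<oplus>\<^sub>M Ed (m+i) \<oplus>\<^sub>M Emat (i-1) n \<oplus>\<^sub>M Emat (m+i-1) n)"

definition Bmat :: "nat \<Rightarrow> rmat" where
  "Bmat m = (\<lambda>a b. if a = b \<and> 1 \<le> a \<and> a \<le> m+1 then 1 else 0)"

definition cvec :: "nat \<Rightarrow> nat \<Rightarrow> real" where
  "cvec m i = (if i = m then 1 else 0)"

definition primal_feasible :: "nat \<Rightarrow> (nat \<Rightarrow> real) \<Rightarrow> bool" where
  "primal_feasible m x \<longleftrightarrow>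
     psd (2*m+1) (\<lambda>a b. Bmat m a b - (\<Sum>i\<in>{1..m}. x i * Acon m i a b))"

definition dual_feasible :: "nat \<Rightarrow> rmat \<Rightarrow> bool" where
  "dual_feasible m Y \<longleftrightarrow>
     (\<forall>i\<in>{1..m}. frob (2*m+1) (Acon m i) Y = cvec m i) \<and> psd (2*m+1) Y"

text \<open>Optimal values in the extended reals (sup over empty = -\<infinity>, inf over empty = +\<infinity>).\<close>
definition valP :: "nat \<Rightarrow> ereal" where
  "valP m = (SUP x \<in> {x. primal_feasible m x}. ereal (\<Sum>i\<in>{1..m}. cvec m i * x i))"

definition valD :: "nat \<Rightarrow> ereal" where
  "valD m = (INF Y \<in> {Y. dual_feasible m Y}. ereal (frob (2*m+1) (Bmat m) Y))"

end

theory Submission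
  imports Defs
begin

lemma frob_add[simp]: "frob n (S \<oplus>\<^sub>M T) Y = frob n S Y + frob n T Y"
  by (simp add: frob_def madd_def distrib_right sum.distrib)
lemma frob_sub[simp]: "frob n (S \<ominus>\<^sub>M T) Y = frob n S Y - frob n T Y"
  by (simp add: frob_def msub_def left_diff_distrib sum_subtractf)

lemma inner_Emat:
  assumes "i \<in> {1..n}" "j \<in> {1..n}"
  shows "(\<Sum>b\<in>{1..n}. Emat i j a b * Y b a) = (if a = i then Y j a else 0) + (if a = j \<and> i \<noteq> j then Y i a else 0)"
proof -
  have "(\<Sum>b\<in>{1..n}. Emat i j a b * Y b a) = (\<Sum>b\<in>{1..n}. (if b = j then (if a = i then Y j a else 0) else 0) + (if b = i then (if a = j \<and> i \<noteq> j then Y i a else 0) else 0))"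
    by (rule sum.cong) (auto simp: Emat_def)
  also have "\<dots> = (if a = i then Y j a else 0) + (if a = j \<and> i \<noteq> j then Y i a else 0)"
    using assms by (simp add: sum.distrib)
  finally show ?thesis .
qed

lemma frob_Emat[simp]:
  assumes "i \<in> {1..n}" "j \<in> {1..n}"
  shows "frob n (Emat i j) Y = (if i = j then Y i i else Y j i + Y i j)"
  unfolding frob_def using inner_Emat[OF assms, of _ Y] assms by (simp add: sum.distrib)

lemma qf2:
  fixes M :: rmat and s t :: real
  assumes "a \<in> {1..n}" "b \<in> {1..n}" "a \<noteq> b"
  shows "(\<Sum>c\<in>{1..n}. \<Sum>d\<in>{1..n}. (if c = a then s else if c = b then t else 0) * M c d * (if d = a then s else if d = b then t else 0))
     = s*s*M a a + s*t*M a b + t*s*M b a + t*t*M b b"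
proof -
  have i: "\<And>c. (\<Sum>d\<in>{1..n}. (if c = a then s else if c = b then t else 0) * M c d * (if d = a then s else if d = b then t else 0))
     = (if c = a then s else if c = b then t else 0) * (M c a * s + M c b * t)"
  proof -
    fix c
    have "(\<Sum>d\<in>{1..n}. (if c = a then s else if c = b then t else 0) * M c d * (if d = a then s else if d = b then t else 0))
      = (\<Sum>d\<in>{1..n}. (if d = a then (if c = a then s else if c = b then t else 0) * M c a * s else 0) + (if d = b then (if c = a then s else if c = b then t else 0) * M c b * t else 0))"
      by (rule sum.cong) (use assms in auto)
    also have "\<dots> = (if c = a then s else if c = b then t else 0) * (M c a * s + M c b * t)"
      using assms by (simp add: sum.distrib algebra_simps)
    finally show "?thesis c" .
  qed
  have "(\<Sum>c\<in>{1..n}. (if c = a then s else if c = b then t else 0) * (M c a * s + M c b * t))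
    = (\<Sum>c\<in>{1..n}. (if c = a then s * (M a a * s + M a b * t) else 0) + (if c = b then t * (M b a * s + M b b * t) else 0))"
    by (rule sum.cong) (use assms in auto)
  also have "\<dots> = s*s*M a a + s*t*M a b + t*s*M b a + t*t*M b b"
    using assms by (simp add: sum.distrib algebra_simps)
  finally show ?thesis unfolding i .
qed

lemma psd_diag: fixes M :: rmat assumes "psd n M" "a \<in> {1..n}" shows "M a a \<ge> 0"
proof -
  have "a \<noteq> (if a = 1 then 2 else 1)" by auto
  have H: "\<forall>v :: nat \<Rightarrow> real. (\<Sum>a\<in>{1..n}. \<Sum>b\<in>{1..n}. v a * M a b * v b) \<ge> 0" using assms unfolding psd_def by blast
  have "0 \<le> (\<Sum>c\<in>{1..n}. \<Sum>d\<in>{1..n}. (if c = a then 1 else 0) * M c d * (if d = a then 1 else 0))"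
    using H[rule_format, of "\<lambda>c. if c = a then 1 else 0"] by simp
  also have "\<dots> = (\<Sum>c\<in>{1..n}. (if c = a then M a a else 0))"
    by (rule sum.cong) (auto simp: if_distrib cong: if_cong)
  finally show ?thesis using assms(2) by simp
qed

lemma psd_sym: "psd n M \<Longrightarrow> a \<in> {1..n} \<Longrightarrow> b \<in> {1..n} \<Longrightarrow> M a b = M b a"
  unfolding psd_def symm_def by blast

lemma psd_zero:
  fixes M :: rmat
  assumes "psd n M" "a \<in> {1..n}" "b \<in> {1..n}" "a \<noteq> b" "M a a = 0"
  shows "M a b = 0"
proof (rule ccontr)
  assume ne: "M a b \<noteq> 0"
  have sy: "M b a = M a b" using assms unfolding psd_def symm_def by auto
  define t where "t = -(M b b + 1) / (2 * M a b)"
  have H: "\<forall>v :: nat \<Rightarrow> real. (\<Sum>a\<in>{1..n}. \<Sum>b\<in>{1..n}. v a * M a b * v b) \<ge> 0" using assms unfolding psd_def by blast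
  have "0 \<le> (\<Sum>c\<in>{1..n}. \<Sum>d\<in>{1..n}. (if c = a then t else if c = b then 1 else 0) * M c d * (if d = a then t else if d = b then 1 else 0))"
    using H[rule_format, of "\<lambda>c. if c = a then t else if c = b then 1 else 0"] by simp
  also have "\<dots> = t*t*M a a + t*1*M a b + 1*t*M b a + 1*1*M b b"
    using qf2[OF assms(2-4)] by simp
  also have "\<dots> = 2*t*M a b + M b b" using sy assms(5) by simp
  also have "\<dots> = -1" using ne by (simp add: t_def field_simps)
  finally show False by simp
qed


lemma frob_A1: assumes "m \<ge> 2"
  shows "frob (2*m+1) (Acon m 1) Y = Y 1 1 + Y (m+1) (m+1)"
  using assms by (simp add: Acon_def Let_def)

lemma frob_Amid: assumes "2 \<le> i" "i \<le> m - 1"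
  shows "frob (2*m+1) (Acon m i) Y = Y i i + Y (m+i) (m+i) + (Y (2*m+1) (i-1) + Y (i-1) (2*m+1))
     + (Y (2*m+1) (m+i-1) + Y (m+i-1) (2*m+1))"
proof -
  have e1: "frob (2*m+1) (Emat (i-1) (2*m+1)) Y = Y (2*m+1) (i-1) + Y (i-1) (2*m+1)"
    proof -
    have "i-1 \<in> {1..2*m+1}" "2*m+1 \<in> {1..2*m+1}" using assms by auto
    from frob_Emat[OF this, of Y] show ?thesis using assms by auto
  qed
  have e2: "frob (2*m+1) (Emat (m+i-1) (2*m+1)) Y = Y (2*m+1) (m+i-1) + Y (m+i-1) (2*m+1)"
    proof -
    have "m+i-1 \<in> {1..2*m+1}" "2*m+1 \<in> {1..2*m+1}" using assms by auto
    from frob_Emat[OF this, of Y] show ?thesis using assms by auto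
  qed
  have e3: "frob (2*m+1) (Ed i) Y = Y i i" using frob_Emat[of i "2*m+1" i Y] assms by simp
  have e4: "frob (2*m+1) (Ed (m+i)) Y = Y (m+i) (m+i)" proof -
    have "m+i \<in> {1..2*m+1}" "m+i \<in> {1..2*m+1}" using assms by auto
    from frob_Emat[OF this, of Y] show ?thesis using assms by auto
  qed
  have "i \<noteq> 1" "i \<noteq> m" using assms by auto
  then show ?thesis unfolding Acon_def Let_def using e1 e2 e3 e4 by simp
qed

lemma frob_Am: assumes "2 \<le> m"
  shows "frob (2*m+1) (Acon m m) Y = Y m m - Y (2*m) (2*m) + (Y (2*m+1) (m-1) + Y (m-1) (2*m+1))
     + (Y (2*m+1) (2*m-1) + Y (2*m-1) (2*m+1))"
proof -
  have e1: "frob (2*m+1) (Emat (m-1) (2*m+1)) Y = Y (2*m+1) (m-1) + Y (m-1) (2*m+1)"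
    proof -
    have "m-1 \<in> {1..2*m+1}" "2*m+1 \<in> {1..2*m+1}" using assms by auto
    from frob_Emat[OF this, of Y] show ?thesis using assms by auto
  qed
  have e2: "frob (2*m+1) (Emat (2*m-1) (2*m+1)) Y = Y (2*m+1) (2*m-1) + Y (2*m-1) (2*m+1)"
    proof -
    have "2*m-1 \<in> {1..2*m+1}" "2*m+1 \<in> {1..2*m+1}" using assms by auto
    from frob_Emat[OF this, of Y] show ?thesis using assms by auto
  qed
  have e3: "frob (2*m+1) (Ed m) Y = Y m m" using frob_Emat[of m "2*m+1" m Y] assms by simp
  have e4: "frob (2*m+1) (Ed (2*m)) Y = Y (2*m) (2*m)" proof -
    have "2*m \<in> {1..2*m+1}" "2*m \<in> {1..2*m+1}" using assms by auto
    from frob_Emat[OF this, of Y] show ?thesis using assms by auto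
  qed
  have "m \<noteq> 1" using assms by auto
  then show ?thesis unfolding Acon_def Let_def using e1 e2 e3 e4 by simp
qed

lemma Acon_nn: assumes "i \<in> {1..m}" shows "Acon m i (2*m+1) (2*m+1) = 0"
  using assms by (auto simp: Acon_def Let_def Emat_def madd_def msub_def)

lemma Acon_col: assumes "i \<in> {1..m}" "m \<ge> 2" shows "Acon m i (m-1) (2*m+1) = (if i = m then 1 else 0)"
  using assms by (auto simp: Acon_def Let_def Emat_def madd_def msub_def)

lemma Bmat_psd: "psd (2*m+1) (Bmat m)"
  unfolding psd_def symm_def
proof (intro conjI allI ballI)
  fix a b show "Bmat m a b = Bmat m b a" by (auto simp: Bmat_def)
next
  fix v :: "nat \<Rightarrow> real"
  have "(\<Sum>a\<in>{1..2*m+1}. \<Sum>b\<in>{1..2*m+1}. v a * Bmat m a b * v b) = (\<Sum>a\<in>{1..2*m+1}. (if a \<le> m+1 then v a * v a else 0))"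
  proof (rule sum.cong)
    fix a assume a: "a \<in> {1..2*m+1}"
    have "(\<Sum>b\<in>{1..2*m+1}. v a * Bmat m a b * v b) = (\<Sum>b\<in>{1..2*m+1}. if b = a then (if a \<le> m+1 then v a * v a else 0) else 0)"
      by (rule sum.cong) (use a in \<open>auto simp: Bmat_def\<close>)
    also have "\<dots> = (if a \<le> m+1 then v a * v a else 0)" using a by simp
    finally show "(\<Sum>b\<in>{1..2*m+1}. v a * Bmat m a b * v b) = (if a \<le> m+1 then v a * v a else 0)" .
  qed simp
  also have "\<dots> \<ge> 0" by (rule sum_nonneg) auto
  finally show "(\<Sum>a\<in>{1..2*m+1}. \<Sum>b\<in>{1..2*m+1}. v a * Bmat m a b * v b) \<ge> 0" .
qed

lemma primal_xm: assumes "m \<ge> 2" "primal_feasible m x" shows "x m = 0"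
proof -
  define S where "S = (\<lambda>a b. Bmat m a b - (\<Sum>i\<in>{1..m}. x i * Acon m i a b))"
  have ps: "psd (2*m+1) S" using assms(2) unfolding primal_feasible_def S_def .
  have "S (2*m+1) (2*m+1) = 0" unfolding S_def using Acon_nn assms(1) by (simp add: Bmat_def)
  moreover have mem: "2*m+1 \<in> {1..2*m+1}" "m-1 \<in> {1..2*m+1}" "2*m+1 \<noteq> m-1" using assms(1) by auto
  ultimately have "S (2*m+1) (m-1) = 0" using psd_zero[OF ps, of "2*m+1" "m-1"] by blast
  moreover have "S (m-1) (2*m+1) = S (2*m+1) (m-1)" using psd_sym[OF ps mem(2,1)] .
  moreover have "S (m-1) (2*m+1) = - x m"
  proof -
    have "(\<Sum>i\<in>{1..m}. x i * Acon m i (m-1) (2*m+1)) = (\<Sum>i\<in>{1..m}. if i = m then x m else 0)"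
      by (rule sum.cong) (use Acon_col assms(1) in auto)
    also have "\<dots> = x m" using assms(1) by simp
    finally show ?thesis unfolding S_def using assms(1) by (simp add: Bmat_def)
  qed
  ultimately show ?thesis by simp
qed


lemma frob_B: "frob (2*m+1) (Bmat m) Y = (\<Sum>a\<in>{1..2*m+1}. if a \<le> m+1 then Y a a else 0)"
  unfolding frob_def
proof (rule sum.cong)
  fix a assume a: "a \<in> {1..2*m+1}"
  have "(\<Sum>b\<in>{1..2*m+1}. Bmat m a b * Y b a) = (\<Sum>b\<in>{1..2*m+1}. if b = a then (if a \<le> m+1 then Y a a else 0) else 0)"
    by (rule sum.cong) (use a in \<open>auto simp: Bmat_def\<close>)
  also have "\<dots> = (if a \<le> m+1 then Y a a else 0)" using a by simp
  finally show "(\<Sum>b\<in>{1..2*m+1}. Bmat m a b * Y b a) = (if a \<le> m+1 then Y a a else 0)" .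
qed simp

lemma dual_ge: assumes m: "m \<ge> 2" and df: "dual_feasible m Y"
  shows "frob (2*m+1) (Bmat m) Y \<ge> 1"
proof -
  have ps: "psd (2*m+1) Y" using df unfolding dual_feasible_def by blast
  have eq: "\<And>i. i \<in> {1..m} \<Longrightarrow> frob (2*m+1) (Acon m i) Y = cvec m i"
    using df unfolding dual_feasible_def by blast
  have dg: "\<And>a. a \<in> {1..2*m+1} \<Longrightarrow> Y a a \<ge> 0" using psd_diag[OF ps] by blast
  have zr: "Y a (2*m+1) = 0 \<and> Y (2*m+1) a = 0" if "a \<in> {1..2*m}" "Y a a = 0" for a
  proof -
    have mem: "a \<in> {1..2*m+1}" "2*m+1 \<in> {1..2*m+1}" "a \<noteq> 2*m+1" using that by auto
    have "Y a (2*m+1) = 0" using psd_zero[OF ps mem that(2)] .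
    moreover have "Y (2*m+1) a = Y a (2*m+1)" using psd_sym[OF ps mem(2,1)] .
    ultimately show ?thesis by simp
  qed
  have cl: "1 \<le> k \<longrightarrow> k \<le> m-1 \<longrightarrow> Y k k = 0 \<and> Y (m+k) (m+k) = 0" for k
  proof (induction k)
    case 0 then show ?case by simp
  next
    case (Suc k)
    show ?case
    proof (cases "k = 0")
      case True
      have "frob (2*m+1) (Acon m 1) Y = 0" using eq[of 1] m by (simp add: cvec_def)
      hence "Y 1 1 + Y (m+1) (m+1) = 0" using frob_A1[OF m] by simp
      moreover have "Y 1 1 \<ge> 0" "Y (m+1) (m+1) \<ge> 0" using dg m by auto
      ultimately show ?thesis using True by simp
    next
      case False
      show ?thesis
      proof (intro impI)
        assume h: "Suc k \<le> m - 1"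
        with False Suc.IH have ih: "Y k k = 0" "Y (m+k) (m+k) = 0" by auto
        have z1: "Y k (2*m+1) = 0 \<and> Y (2*m+1) k = 0" using zr[of k] ih h False by auto
        have z2: "Y (m+k) (2*m+1) = 0 \<and> Y (2*m+1) (m+k) = 0" using zr[of "m+k"] ih h False by auto
        have "frob (2*m+1) (Acon m (Suc k)) Y = 0" using eq[of "Suc k"] h by (simp add: cvec_def)
        moreover have "frob (2*m+1) (Acon m (Suc k)) Y = Y (Suc k) (Suc k) + Y (m+Suc k) (m+Suc k)"
          using frob_Amid[of "Suc k" m Y] h False z1 z2 by simp
        moreover have "Y (Suc k) (Suc k) \<ge> 0" "Y (m+Suc k) (m+Suc k) \<ge> 0" using dg h by auto
        ultimately show "Y (Suc k) (Suc k) = 0 \<and> Y (m + Suc k) (m + Suc k) = 0" by simp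
      qed
    qed
  qed
  have a1: "Y (m-1) (m-1) = 0" "Y (2*m-1) (2*m-1) = 0" proof -
    have "m + (m - 1) = 2*m-1" using m by simp
    then show "Y (m-1) (m-1) = 0" "Y (2*m-1) (2*m-1) = 0" using cl[of "m-1"] m by auto
  qed
  have mm: "m-1 \<in> {1..2*m}" "2*m-1 \<in> {1..2*m}" using m by auto
  have z1: "Y (m-1) (2*m+1) = 0 \<and> Y (2*m+1) (m-1) = 0" using zr[OF mm(1) a1(1)] .
  have z2: "Y (2*m-1) (2*m+1) = 0 \<and> Y (2*m+1) (2*m-1) = 0" using zr[OF mm(2) a1(2)] .
  have "frob (2*m+1) (Acon m m) Y = 1" using eq[of m] m by (simp add: cvec_def)
  hence ymm: "Y m m - Y (2*m) (2*m) = 1" using frob_Am[OF m, of Y] z1 z2 by simp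
  have "Y (2*m) (2*m) \<ge> 0" using dg m by auto
  with ymm have "Y m m \<ge> 1" by simp
  also have "Y m m \<le> (\<Sum>a\<in>{1..2*m+1}. if a \<le> m+1 then Y a a else 0)"
    using member_le_sum[of m "{1..2*m+1}" "\<lambda>a. if a \<le> m+1 then Y a a else 0"] dg m by auto
  finally show ?thesis unfolding frob_B .
qed

lemma Em_feasible: assumes m: "m \<ge> 2" shows "dual_feasible m (Ed m)" "frob (2*m+1) (Bmat m) (Ed m) = 1"
proof -
  show "frob (2*m+1) (Bmat m) (Ed m) = 1"
  proof -
    have "(\<Sum>a\<in>{1..2*m+1}. if a \<le> m+1 then Ed m a a else 0) = (\<Sum>a\<in>{1..2*m+1}. if a = m then 1 else 0)"
      by (rule sum.cong) (auto simp: Emat_def)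
    also have "\<dots> = 1" using m by simp
    finally show ?thesis unfolding frob_B .
  qed
  have "psd (2*m+1) (Ed m)"
    unfolding psd_def symm_def
  proof (intro conjI allI ballI)
    fix a b show "Ed m a b = Ed m b a" by (auto simp: Emat_def)
  next
    fix v :: "nat \<Rightarrow> real"
    have "(\<Sum>a\<in>{1..2*m+1}. \<Sum>b\<in>{1..2*m+1}. v a * Ed m a b * v b) = (\<Sum>a\<in>{1..2*m+1}. if a = m then v m * v m else 0)"
    proof (rule sum.cong)
      fix a assume a: "a \<in> {1..2*m+1}"
      have "(\<Sum>b\<in>{1..2*m+1}. v a * Ed m a b * v b) = (\<Sum>b\<in>{1..2*m+1}. if b = m then (if a = m then v m * v m else 0) else 0)"
        by (rule sum.cong) (auto simp: Emat_def)
      also have "\<dots> = (if a = m then v m * v m else 0)" using m by simp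
      finally show "(\<Sum>b\<in>{1..2*m+1}. v a * Ed m a b * v b) = (if a = m then v m * v m else 0)" .
    qed simp
    also have "\<dots> \<ge> 0" by (rule sum_nonneg) auto
    finally show "(\<Sum>a\<in>{1..2*m+1}. \<Sum>b\<in>{1..2*m+1}. v a * Ed m a b * v b) \<ge> 0" .
  qed
  moreover have "frob (2*m+1) (Acon m i) (Ed m) = cvec m i" if i: "i \<in> {1..m}" for i
  proof -
    consider "i = 1" | "2 \<le> i \<and> i \<le> m - 1" | "i = m" using i by force
    then show ?thesis
    proof cases
      case 1 then show ?thesis using frob_A1[OF m] m by (simp add: Emat_def cvec_def)
    next
      case 2 then show ?thesis using frob_Amid[of i m "Ed m"] by (simp add: Emat_def cvec_def)
    next
      case 3 then show ?thesis using frob_Am[OF m] m by (simp add: Emat_def cvec_def)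
    qed
  qed
  ultimately show "dual_feasible m (Ed m)" unfolding dual_feasible_def by blast
qed

theorem mainTheorem8:
  fixes m :: nat
  assumes "m \<ge> 2"
  shows "valP m = 0 \<and> 0 < valD m \<and> valD m = 1"
proof -
  have P: "valP m = 0"
    unfolding valP_def
  proof (rule SUP_eq_const)
    have "primal_feasible m (\<lambda>_. 0)" unfolding primal_feasible_def using Bmat_psd[of m] by simp
    then show "{x. primal_feasible m x} \<noteq> {}" by blast
  next
    fix x assume "x \<in> {x. primal_feasible m x}"
    then have "x m = 0" using primal_xm assms by blast
    moreover have "(\<Sum>i\<in>{1..m}. cvec m i * x i) = x m" proof -
      have "(\<Sum>i\<in>{1..m}. cvec m i * x i) = (\<Sum>i\<in>{1..m}. if i = m then x m else 0)"
        by (rule sum.cong) (auto simp: cvec_def)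
      then show ?thesis using assms by simp
    qed
    ultimately show "ereal (\<Sum>i\<in>{1..m}. cvec m i * x i) = 0" by (simp add: zero_ereal_def)
  qed
  have D: "valD m = 1"
    unfolding valD_def
  proof (rule antisym)
    show "(INF Y \<in> {Y. dual_feasible m Y}. ereal (frob (2*m+1) (Bmat m) Y)) \<le> 1"
      using INF_lower[of "Ed m" "{Y. dual_feasible m Y}" "\<lambda>Y. ereal (frob (2*m+1) (Bmat m) Y)"]
        Em_feasible[OF assms] by (simp add: one_ereal_def)
    show "1 \<le> (INF Y \<in> {Y. dual_feasible m Y}. ereal (frob (2*m+1) (Bmat m) Y))"
      by (rule INF_greatest) (use dual_ge[OF assms] in \<open>auto simp: one_ereal_def\<close>)
  qed
  show ?thesis using P D by simp
qed

end
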